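(* Let $\mathcal{M}$ be a set of models, $c:\mathcal{M}\to(0,\infty)$ a cost function, $\mathcal{S}$ a step neighborhood function, $m_0$ a base model, and $\bm{\alpha}=(\alpha_1,\alpha_2,\dots)$ a sequence of real weights, as in the context. Let $\lambda>0$. Then $$\min_{m\in\mathcal{M}}\big(c(m)+\lambda\mathcal{L}_{\bm{\alpha}}(m)\big)=\min_{K\ge 0}\Big(\min_{\bm{m}\in\mathcal{P}_K} c(m_K)+\lambda\sum_{k=1}^K\alpha_k c(m_k)\Big),$$ and if $K^*\ge0$ and $\bm{m}^*=(m^*_1,\dots,m^*_{K^*})\in\mathcal{P}_{K^*}$ attain the minimum on the right-hand side, then the model $m^*_{K^*}$ is Pareto optimal with respect to the two objectives $c(\cdot)$ and $\mathcal{L}_{\bm{\alpha}}(\cdot)$ on $\mathcal{M}$ (i.e., there is no $m\in\mathcal{M}$ with $c(m)\le c(m^*_{K^*})$ and $\mathcal{L}_{\bm{\alpha}}(m)\le\mathcal{L}_{\bm{\alpha}}(m^*_{K^*})$ with at least one inequality strict).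
   Context: Setting: $\mathcal{M}$ is a set (of models), $c:\mathcal{M}\to(0,\infty)$ is a cost function, and $\mathcal{S}:\mathcal{M}\to 2^{\mathcal{M}}$ is a step neighborhood function with $\mathcal{S}(m)\neq\emptyset$ for all $m$. A fixed base model $m_0\in\mathcal{M}$ is given. An interpretable path of length $K\ge 0$ is a sequence $\bm{m}=(m_1,\dots,m_K)$ with $m_k\in\mathcal{S}(m_{k-1})$ for $1\le k\le K$; its final model is $m_K$ (which is $m_0$ when $K=0$). $\mathcal{P}_K$ is the set of paths of length $K$, $\mathcal{P}_K(m)=\{\bm{m}\in\mathcal{P}_K:m_K=m\}$, $\mathcal{P}(m)=\bigcup_{K\ge0}\mathcal{P}_K(m)$. For a weight sequence $\bm{\alpha}$, the path loss is $\mathcal{L}_{\bm{\alpha}}(\bm{m})=\sum_{k=1}^{|\bm{m}|}\alpha_k c(m_k)$ (empty sum $=0$), and the model loss is $\mathcal{L}_{\bm{\alpha}}(m)=\min_{\bm{m}\in\mathcal{P}(m)}\mathcal{L}_{\bm{\alpha}}(\bm{m})$ if $\mathcal{P}(m)\neq\emptyset$ and $\infty$ otherwise. *)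

theory Defs
  imports Complex_Main "HOL-Library.Extended_Real"
begin

text \<open>The set of models M is rendered as the type 'm (UNIV). A path (m_1,...,m_K) is a
  list; is_path S m0 ms means m_1 \<in> S m0 and m_k \<in> S m_(k-1).\<close>

fun is_path :: "('m \<Rightarrow> 'm set) \<Rightarrow> 'm \<Rightarrow> 'm list \<Rightarrow> bool" where
  "is_path S m [] = True"
| "is_path S m (x # xs) = (x \<in> S m \<and> is_path S x xs)"

definition paths :: "('m \<Rightarrow> 'm set) \<Rightarrow> 'm \<Rightarrow> nat \<Rightarrow> 'm list set" where
  "paths S m0 K = {ms. is_path S m0 ms \<and> length ms = K}"

definition final_model :: "'m \<Rightarrow> 'm list \<Rightarrow> 'm" where
  "final_model m0 ms = last (m0 # ms)"

text \<open>Path loss: sum_{k=1}^{K} alpha_k c(m_k); alpha is indexed from 1.\<close>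
definition path_loss :: "(nat \<Rightarrow> real) \<Rightarrow> ('m \<Rightarrow> real) \<Rightarrow> 'm list \<Rightarrow> real" where
  "path_loss \<alpha> c ms = (\<Sum>k=1..length ms. \<alpha> k * c (ms ! (k - 1)))"

text \<open>Model loss: infimum (a minimum when attained) of path losses over all paths ending
  at m; equals \<infinity> if there is no such path.\<close>
definition model_loss ::
  "('m \<Rightarrow> 'm set) \<Rightarrow> 'm \<Rightarrow> (nat \<Rightarrow> real) \<Rightarrow> ('m \<Rightarrow> real) \<Rightarrow> 'm \<Rightarrow> ereal" where
  "model_loss S m0 \<alpha> c m =
     (INF ms \<in> {ms. is_path S m0 ms \<and> final_model m0 ms = m}. ereal (path_loss \<alpha> c ms))"

definition pareto_optimal :: "('m \<Rightarrow> ereal) \<Rightarrow> ('m \<Rightarrow> ereal) \<Rightarrow> 'm \<Rightarrow> bool" where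
  "pareto_optimal f g m \<longleftrightarrow>
     \<not> (\<exists>m'. f m' \<le> f m \<and> g m' \<le> g m \<and> (f m' < f m \<or> g m' < g m))"

end

theory Submission
  imports Defs
begin

lemma INF_UNION_my: "(INF x\<in>(\<Union>y\<in>A. g y). f x) = (INF y\<in>A. INF x\<in>g y. f x :: _ :: complete_lattice)"
  by (rule antisym) (auto intro!: INF_greatest INF_lower INF_lower2)

lemma key:
  fixes lam a :: real and f :: "'x \<Rightarrow> real"
  assumes lam: "lam > 0"
  shows "ereal a + ereal lam * (INF x\<in>A. ereal (f x)) = (INF x\<in>A. ereal (a + lam * f x))"
proof (rule antisym)
  define h where "h = (\<lambda>y::ereal. ereal a + ereal lam * y)"
  define g where "g = (\<lambda>y::ereal. ereal (1/lam) * (y - ereal a))"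
  have hm: "h y \<le> h z" if "y \<le> z" for y z
    unfolding h_def using that lam by (intro add_left_mono ereal_mult_left_mono) auto
  have gm: "g y \<le> g z" if "y \<le> z" for y z
    unfolding g_def using that lam
    by (intro ereal_mult_left_mono) (auto simp: ereal_minus_mono)
  have hg: "h (g y) = y" for y
    unfolding h_def g_def using lam by (cases y) auto
  have gf: "g (ereal (a + lam * f x)) = ereal (f x)" for x
    unfolding g_def using lam by auto
  show "ereal a + ereal lam * (INF x\<in>A. ereal (f x)) \<le> (INF x\<in>A. ereal (a + lam * f x))"
  proof (rule INF_greatest)
    fix x assume "x \<in> A"
    hence "h (INF x\<in>A. ereal (f x)) \<le> h (ereal (f x))" by (intro hm INF_lower)
    thus "ereal a + ereal lam * (INF x\<in>A. ereal (f x)) \<le> ereal (a + lam * f x)" by (simp add: h_def)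
  qed
  have "g (INF x\<in>A. ereal (a + lam * f x)) \<le> (INF x\<in>A. ereal (f x))"
  proof (rule INF_greatest)
    fix x assume "x \<in> A"
    hence "g (INF x\<in>A. ereal (a + lam * f x)) \<le> g (ereal (a + lam * f x))" by (intro gm INF_lower)
    thus "g (INF x\<in>A. ereal (a + lam * f x)) \<le> ereal (f x)" by (simp add: gf)
  qed
  from hm[OF this] have "h (g (INF x\<in>A. ereal (a + lam * f x))) \<le> h (INF x\<in>A. ereal (f x))" .
  thus "(INF x\<in>A. ereal (a + lam * f x)) \<le> ereal a + ereal lam * (INF x\<in>A. ereal (f x))"
    unfolding hg by (simp add: h_def)
qed

theorem proposition1:
  fixes c :: "'m \<Rightarrow> real" and S :: "'m \<Rightarrow> 'm set" and m0 :: 'm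
    and alpha :: "nat \<Rightarrow> real" and lam :: real
  assumes c_pos: "\<And>m. c m > 0"
    and S_ne: "\<And>m. S m \<noteq> {}"
    and lam_pos: "lam > 0"
  shows "(INF m. ereal (c m) + ereal lam * model_loss S m0 alpha c m)
         = (INF K. INF ms \<in> paths S m0 K.
              ereal (c (final_model m0 ms) + lam * path_loss alpha c ms))
         \<and> (\<forall>Kstar. \<forall>msstar \<in> paths S m0 Kstar.
           (\<forall>K. \<forall>ms \<in> paths S m0 K.
              c (final_model m0 msstar) + lam * path_loss alpha c msstar
              \<le> c (final_model m0 ms) + lam * path_loss alpha c ms) \<longrightarrow>
           pareto_optimal (\<lambda>m. ereal (c m)) (model_loss S m0 alpha c) (final_model m0 msstar))"
proof -
  define P where "P m = {ms. is_path S m0 ms \<and> final_model m0 ms = m}" for m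
  define F where "F ms = ereal (c (final_model m0 ms) + lam * path_loss alpha c ms)" for ms
  define comb where "comb m = ereal (c m) + ereal lam * model_loss S m0 alpha c m" for m
  have comb: "comb m = (INF ms\<in>P m. F ms)" for m
  proof -
    have "comb m = (INF ms\<in>P m. ereal (c m + lam * path_loss alpha c ms))"
      unfolding comb_def model_loss_def P_def by (rule key[OF lam_pos])
    also have "\<dots> = (INF ms\<in>P m. F ms)"
      by (rule INF_cong) (auto simp: P_def F_def)
    finally show ?thesis .
  qed
  have U1: "(\<Union>m. P m) = {ms. is_path S m0 ms}" by (auto simp: P_def)
  have U2: "(\<Union>K. paths S m0 K) = {ms. is_path S m0 ms}" by (auto simp: paths_def)
  have part1: "(INF m. comb m) = (INF K. INF ms \<in> paths S m0 K. F ms)"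
  proof -
    have "(INF m. comb m) = (INF m. INF ms\<in>P m. F ms)" by (simp add: comb)
    also have "\<dots> = (INF ms\<in>(\<Union>m. P m). F ms)" by (rule INF_UNION_my[symmetric])
    also have "\<dots> = (INF ms\<in>(\<Union>K. paths S m0 K). F ms)" by (simp only: U1 U2)
    also have "\<dots> = (INF K. INF ms \<in> paths S m0 K. F ms)" by (rule INF_UNION_my)
    finally show ?thesis .
  qed
  have part2: "pareto_optimal (\<lambda>m. ereal (c m)) (model_loss S m0 alpha c) (final_model m0 msstar)"
    if ms: "msstar \<in> paths S m0 Kstar"
      and opt: "\<forall>K. \<forall>ms \<in> paths S m0 K.
              c (final_model m0 msstar) + lam * path_loss alpha c msstar
              \<le> c (final_model m0 ms) + lam * path_loss alpha c ms" for Kstar msstar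
  proof -
    define ms where "ms = final_model m0 msstar"
    have lb: "F msstar \<le> comb m" for m
      unfolding comb
    proof (rule INF_greatest)
      fix x assume "x \<in> P m"
      hence "x \<in> paths S m0 (length x)" by (auto simp: P_def paths_def)
      thus "F msstar \<le> F x" using opt by (auto simp: F_def)
    qed
    have "msstar \<in> P ms" using ms by (auto simp: P_def paths_def ms_def)
    hence "comb ms \<le> F msstar" unfolding comb by (rule INF_lower)
    with lb[of ms] have eq: "comb ms = F msstar" by auto
    show ?thesis unfolding pareto_optimal_def
    proof
      assume "\<exists>m'. ereal (c m') \<le> ereal (c (final_model m0 msstar)) \<and>
        model_loss S m0 alpha c m' \<le> model_loss S m0 alpha c (final_model m0 msstar) \<and>
        (ereal (c m') < ereal (c (final_model m0 msstar)) \<or>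
         model_loss S m0 alpha c m' < model_loss S m0 alpha c (final_model m0 msstar))"
      then obtain m' where h1: "c m' \<le> c ms" and h2: "model_loss S m0 alpha c m' \<le> model_loss S m0 alpha c ms"
        and h3: "c m' < c ms \<or> model_loss S m0 alpha c m' < model_loss S m0 alpha c ms"
        by (auto simp: ms_def)
      obtain r where r: "model_loss S m0 alpha c ms = ereal r"
      proof (cases "model_loss S m0 alpha c ms")
        case (real r) thus ?thesis using that by auto
      next
        case PInf thus ?thesis using eq lam_pos by (simp add: comb_def F_def)
      next
        case MInf thus ?thesis using eq lam_pos by (simp add: comb_def F_def)
      qed
      have "comb m' < comb ms"
      proof (cases "model_loss S m0 alpha c m'")
        case (real s)
        with h2 h3 r have "s \<le> r" "c m' < c ms \<or> s < r" by auto
        hence "c m' + lam * s < c ms + lam * r" using h1 lam_pos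
          by (smt (verit) mult_strict_left_mono mult_left_mono)
        thus ?thesis using real r by (simp add: comb_def)
      next
        case PInf thus ?thesis using h2 r by simp
      next
        case MInf thus ?thesis using r lam_pos by (simp add: comb_def)
      qed
      with lb[of m'] eq show False by simp
    qed
  qed
  show ?thesis
    using part1 part2 unfolding comb_def F_def by blast
qed

end
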